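(* Let $n\ge 1$ and let $T$ be an HR-tree whose labels are $1,\dots,n$. If $\mathrm{leaf}(T)=i$, then the permutation $w(T)\in\mathfrak S_n$ satisfies $\mathrm{run}(w(T))\ge i$.
   Context: All trees are rooted binary trees in which each child of a node is designated as a left or a right child. For a finite totally ordered set $Y$, a min–max tree on $Y$ is such a tree whose nodes are labeled bijectively by $Y$ so that the label of each node is either the minimum or the maximum of the labels in the subtree rooted at that node. A node with at least one child is an inner node; an inner node is a min-node (resp. max-node) if its label is the minimum (resp. maximum) of the labels of its subtree. An HR-tree is a min–max tree in which every inner node $s$ has a nonempty right subtree, and this right subtree contains the maximum label of the subtree rooted at $s$ if $s$ is a min-node, and the minimum label of that subtree if $s$ is a max-node (so a node with exactly one child has only a right child). The reading word $w(T)$ is the in-order reading: $w(T)=w(L)\,\ell\,w(R)$ where $\ell$ is the root label and $L,R$ are the left and right subtrees ($w(\emptyset)$ empty). $\mathrm{leaf}(T)$ is the number of nodes of $T$ without children. For $\pi=\pi_1\cdots\pi_n\in\mathfrak S_n$, $\pi$ changes direction at $i\in\{2,\dots,n-1\}$ if $\pi_{i-1}<\pi_i>\pi_{i+1}$ or $\pi_{i-1}>\pi_i<\pi_{i+1}$, and $\mathrm{run}(\pi)$ (the number of alternating runs) is $1$ plus the number of such indices $i$. *)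

theory Defs
  imports Main "HOL-Library.Tree"
begin

definition inner_node :: "'a tree \<Rightarrow> 'a tree \<Rightarrow> bool" where
  "inner_node l r \<longleftrightarrow> l \<noteq> Leaf \<or> r \<noteq> Leaf"

fun minmax_tree :: "nat tree \<Rightarrow> bool" where
  "minmax_tree Leaf = True"
| "minmax_tree (Node l a r) =
     (minmax_tree l \<and> minmax_tree r \<and>
      (a = Min (set_tree (Node l a r)) \<or> a = Max (set_tree (Node l a r))))"

fun hr_cond :: "nat tree \<Rightarrow> bool" where
  "hr_cond Leaf = True"
| "hr_cond (Node l a r) =
     (hr_cond l \<and> hr_cond r \<and>
      (inner_node l r \<longrightarrow>
         (r \<noteq> Leaf \<and>
          (a = Min (set_tree (Node l a r)) \<longrightarrow> Max (set_tree (Node l a r)) \<in> set_tree r) \<and>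
          (a = Max (set_tree (Node l a r)) \<longrightarrow> Min (set_tree (Node l a r)) \<in> set_tree r))))"

definition HR_tree :: "nat tree \<Rightarrow> bool" where
  "HR_tree T \<longleftrightarrow> minmax_tree T \<and> hr_cond T"

text \<open>Number of nodes without children.\<close>
fun leaf_count :: "'a tree \<Rightarrow> nat" where
  "leaf_count Leaf = 0"
| "leaf_count (Node l a r) =
     (if l = Leaf \<and> r = Leaf then 1 else leaf_count l + leaf_count r)"

text \<open>Reading word = in-order traversal (library function inorder).
  Number of alternating runs, with 0-based indices: position i (0 < i < length - 1)
  is a change of direction.\<close>
definition changes_dir :: "nat list \<Rightarrow> nat \<Rightarrow> bool" where
  "changes_dir w i \<longleftrightarrow>
     (w ! (i - 1) < w ! i \<and> w ! i > w ! (i + 1)) \<or>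
     (w ! (i - 1) > w ! i \<and> w ! i < w ! (i + 1))"

definition run :: "nat list \<Rightarrow> nat" where
  "run w = 1 + card {i. 0 < i \<and> i + 1 < length w \<and> changes_dir w i}"

end

theory Submission
  imports Defs
begin

definition CD :: "nat list \<Rightarrow> nat set" where
  "CD w = {i. 0 < i \<and> i + 1 < length w \<and> changes_dir w i}"

lemma run_CD: "run w = 1 + card (CD w)"
  by (simp add: run_def CD_def)

lemma CD_fin: "finite (CD w)"
  by (rule finite_subset[of _ "{..<length w}"]) (auto simp: CD_def)

lemma CD_left: "i \<in> CD xs \<Longrightarrow> i \<in> CD (xs @ ys)"
  by (auto simp: CD_def changes_dir_def nth_append)

lemma CD_right: "i \<in> CD ys \<Longrightarrow> i + length xs \<in> CD (xs @ ys)"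
proof -
  assume h: "i \<in> CD ys"
  then have "0 < i" "i + 1 < length ys" by (auto simp: CD_def)
  moreover have "(xs @ ys) ! (i + length xs - 1) = ys ! (i - 1)"
  proof -
    have "i + length xs - 1 = (i - 1) + length xs" using \<open>0 < i\<close> by simp
    then show ?thesis by (simp add: nth_append)
  qed
  moreover have "(xs @ ys) ! (i + length xs) = ys ! i" by (simp add: nth_append)
  moreover have "(xs @ ys) ! (i + length xs + 1) = ys ! (i + 1)" by (simp add: nth_append)
  ultimately show ?thesis using h by (auto simp: CD_def changes_dir_def)
qed

lemma run_left: "run xs \<le> run (xs @ ys)"
  unfolding run_CD using CD_left CD_fin by (simp add: card_mono subsetI)

lemma run_right: "run ys \<le> run (xs @ ys)"
proof -
  have "card (CD ys) = card ((\<lambda>i. i + length xs) ` CD ys)"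
    by (simp add: card_image inj_on_def)
  also have "\<dots> \<le> card (CD (xs @ ys))"
    using CD_right CD_fin by (intro card_mono) auto
  finally show ?thesis unfolding run_CD by simp
qed

lemma run_mid:
  assumes "u \<noteq> []" "v \<noteq> []"
    and ext: "(\<forall>x\<in>set u \<union> set v. a < x) \<or> (\<forall>x\<in>set u \<union> set v. x < a)"
  shows "run u + run v \<le> run (u @ a # v)"
proof -
  let ?w = "u @ a # v"
  let ?S = "(\<lambda>i. i + length (u @ [a])) ` CD v"
  have m: "length u \<in> CD ?w"
  proof -
    have "?w ! (length u - 1) = last u" using assms(1)
      by (simp add: nth_append last_conv_nth)
    moreover have "?w ! (length u) = a" by simp
    moreover have "?w ! (length u + 1) = hd v" using assms(2)
      by (simp add: nth_append hd_conv_nth)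
    moreover have "last u \<in> set u" "hd v \<in> set v" using assms by auto
    ultimately show ?thesis using assms
      by (auto simp: CD_def changes_dir_def)
  qed
  have s1: "CD u \<subseteq> CD ?w" using CD_left by blast
  have s3: "?S \<subseteq> CD ?w" using CD_right[of _ v "u @ [a]"] by auto
  have d1: "CD u \<inter> {length u} = {}" by (auto simp: CD_def)
  have d2: "(CD u \<union> {length u}) \<inter> ?S = {}" by (auto simp: CD_def)
  have "card (CD u) + 1 + card (CD v) = card (CD u \<union> {length u}) + card ?S"
    using d1 CD_fin by (simp add: card_Un_disjoint card_image inj_on_def)
  also have "\<dots> = card (CD u \<union> {length u} \<union> ?S)"
    using d2 CD_fin by (intro card_Un_disjoint[symmetric]) auto
  also have "\<dots> \<le> card (CD ?w)"
    using s1 s3 m CD_fin by (intro card_mono) auto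
  finally show ?thesis unfolding run_CD by simp
qed

lemma main_gen: "minmax_tree T \<Longrightarrow> distinct (inorder T) \<Longrightarrow> leaf_count T \<le> run (inorder T)"
proof (induction T)
  case Leaf
  then show ?case by simp
next
  case (Node l a r)
  have ml: "minmax_tree l" "minmax_tree r" using Node.prems by auto
  have dl: "distinct (inorder l)" "distinct (inorder r)"
    and na: "a \<notin> set (inorder l)" "a \<notin> set (inorder r)" using Node.prems by auto
  have IHl: "leaf_count l \<le> run (inorder l)" using Node.IH(1) ml dl by blast
  have IHr: "leaf_count r \<le> run (inorder r)" using Node.IH(2) ml dl by blast
  show ?case
  proof (cases "l = Leaf")
    case True
    show ?thesis
    proof (cases "r = Leaf")
      case True
      with \<open>l = Leaf\<close> show ?thesis by (simp add: run_def)
    next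
      case False
      have "run (inorder r) \<le> run ([a] @ inorder r)" by (rule run_right)
      with IHr True False show ?thesis by simp
    qed
  next
    case lF: False
    show ?thesis
    proof (cases "r = Leaf")
      case True
      have "run (inorder l) \<le> run (inorder l @ [a])" by (rule run_left)
      with IHl True lF show ?thesis by simp
    next
      case False
      have ne: "inorder l \<noteq> []" "inorder r \<noteq> []" using lF False by auto
      have fin: "finite (set_tree (Node l a r))" by simp
      have mm: "a = Min (set_tree (Node l a r)) \<or> a = Max (set_tree (Node l a r))"
        using Node.prems by simp
      have ext: "(\<forall>x\<in>set (inorder l) \<union> set (inorder r). a < x) \<or>
                 (\<forall>x\<in>set (inorder l) \<union> set (inorder r). x < a)"
      proof (cases "a = Min (set_tree (Node l a r))")
        case True
        have "\<forall>x\<in>set (inorder l) \<union> set (inorder r). a \<le> x"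
          using True fin by (metis Min_le UnE set_inorder tree.set_intros(1) tree.set_intros(3))
        then have "\<forall>x\<in>set (inorder l) \<union> set (inorder r). a < x" using na
          by (metis UnE order_le_neq_trans)
        then show ?thesis by blast
      next
        case False
        then have M: "a = Max (set_tree (Node l a r))" using mm by simp
        have "\<forall>x\<in>set (inorder l) \<union> set (inorder r). x \<le> a"
          using M fin by (metis Max_ge UnE set_inorder tree.set_intros(1) tree.set_intros(3))
        then have "\<forall>x\<in>set (inorder l) \<union> set (inorder r). x < a" using na
          by (metis UnE order_le_neq_trans)
        then show ?thesis by blast
      qed
      have "run (inorder l) + run (inorder r) \<le> run (inorder l @ a # inorder r)"
        by (rule run_mid[OF ne ext])
      with IHl IHr lF False show ?thesis by simp
    qed
  qed
qed

theorem mainTheorem1: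
  fixes T :: "nat tree" and n i :: nat
  assumes "n \<ge> 1"
    and "HR_tree T"
    and "distinct (inorder T)"
    and "set_tree T = {1..n}"
    and "leaf_count T = i"
  shows "run (inorder T) \<ge> i"
  using main_gen assms by (auto simp: HR_tree_def)

end
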